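(* Let $X$ be a compact metric space with metric $d$, let $0<L<1$, and let $f\colon X\to X$ be a continuous map with the $L$-Lipschitz shadowing property. Then the set $\mathcal{C}(f)$ of chain components of $f$ is finite, and for every $C\in\mathcal{C}(f)$, the restriction $f|_C\colon C\to C$ (with the restricted metric) has the $L$-Lipschitz shadowing property.
   Context: For a continuous map $g\colon Y\to Y$ on a metric space $(Y,d)$ and $\delta>0$, a sequence $(x_i)_{i\ge0}$ in $Y$ is a $\delta$-pseudo orbit of $g$ if $d(g(x_i),x_{i+1})\le\delta$ for all $i\ge0$; it is $\epsilon$-shadowed by $y$ if $d(g^i(y),x_i)\le\epsilon$ for all $i\ge0$. $g$ has the $L$-Lipschitz shadowing property if there is $\delta_0>0$ such that for every $0<\delta\le\delta_0$, every $\delta$-pseudo orbit of $g$ is $L\delta$-shadowed by some point of $Y$. A $\delta$-chain of $f$ is a finite sequence $(x_i)_{i=0}^k$, $k\ge1$, with $d(f(x_i),x_{i+1})\le\delta$ for $0\le i\le k-1$. Write $x\to y$ if for every $\delta>0$ there is a $\delta$-chain from $x$ to $y$ (i.e. $x_0=x$, $x_k=y$). $CR(f)=\{x\in X: x\to x\}$. On $CR(f)$ define $x\leftrightarrow y$ iff $x\to y$ and $y\to x$; this is an equivalence relation, and its equivalence classes are the chain components of $f$; $\mathcal{C}(f)$ denotes the set of chain components. Each chain component is a closed $f$-invariant subset. *)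

theory Defs
  imports "HOL-Analysis.Analysis"
begin

text \<open>The ambient compact metric space is a set X in a metric_space type, with the
restricted metric dist. All notions are relativised to a carrier set Y.\<close>

definition pseudo_orbit :: "'a::metric_space set \<Rightarrow> ('a \<Rightarrow> 'a) \<Rightarrow> real \<Rightarrow> (nat \<Rightarrow> 'a) \<Rightarrow> bool" where
  "pseudo_orbit Y g \<delta> xs \<longleftrightarrow> (\<forall>i. xs i \<in> Y) \<and> (\<forall>i. dist (g (xs i)) (xs (Suc i)) \<le> \<delta>)"

definition shadows :: "('a::metric_space \<Rightarrow> 'a) \<Rightarrow> real \<Rightarrow> 'a \<Rightarrow> (nat \<Rightarrow> 'a) \<Rightarrow> bool" where
  "shadows g \<epsilon> y xs \<longleftrightarrow> (\<forall>i. dist ((g ^^ i) y) (xs i) \<le> \<epsilon>)"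

definition lipschitz_shadowing :: "'a::metric_space set \<Rightarrow> ('a \<Rightarrow> 'a) \<Rightarrow> real \<Rightarrow> bool" where
  "lipschitz_shadowing Y g L \<longleftrightarrow>
     (\<exists>\<delta>0>0. \<forall>\<delta>. 0 < \<delta> \<and> \<delta> \<le> \<delta>0 \<longrightarrow>
        (\<forall>xs. pseudo_orbit Y g \<delta> xs \<longrightarrow> (\<exists>y\<in>Y. shadows g (L * \<delta>) y xs)))"

definition delta_chain :: "'a::metric_space set \<Rightarrow> ('a \<Rightarrow> 'a) \<Rightarrow> real \<Rightarrow> 'a \<Rightarrow> 'a \<Rightarrow> bool" where
  "delta_chain X f \<delta> x y \<longleftrightarrow>
     (\<exists>k::nat. \<exists>xs. k \<ge> 1 \<and> xs 0 = x \<and> xs k = y \<and> (\<forall>i\<le>k. xs i \<in> X) \<and>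
        (\<forall>i<k. dist (f (xs i)) (xs (Suc i)) \<le> \<delta>))"

definition chain_rel :: "'a::metric_space set \<Rightarrow> ('a \<Rightarrow> 'a) \<Rightarrow> 'a \<Rightarrow> 'a \<Rightarrow> bool" where
  "chain_rel X f x y \<longleftrightarrow> (\<forall>\<delta>>0. delta_chain X f \<delta> x y)"

definition chain_recurrent :: "'a::metric_space set \<Rightarrow> ('a \<Rightarrow> 'a) \<Rightarrow> 'a set" where
  "chain_recurrent X f = {x \<in> X. chain_rel X f x x}"

definition chain_components :: "'a::metric_space set \<Rightarrow> ('a \<Rightarrow> 'a) \<Rightarrow> 'a set set" where
  "chain_components X f =
     {C. \<exists>x\<in>chain_recurrent X f.
           C = {y \<in> chain_recurrent X f. chain_rel X f x y \<and> chain_rel X f y x}}"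

end

theory Submission
  imports Defs
begin



lemma funpow_in: "f ` X \<subseteq> X \<Longrightarrow> w \<in> X \<Longrightarrow> (f ^^ i) w \<in> X"
  by (induction i) auto

lemma dc_mono: "delta_chain X f d x y \<Longrightarrow> d \<le> e \<Longrightarrow> delta_chain X f e x y"
proof -
  assume "delta_chain X f d x y" "d \<le> e"
  then obtain k xs where "k \<ge> 1" "xs 0 = x" "xs k = y" "\<forall>i\<le>k. xs i \<in> X"
    "\<forall>i<k. dist (f (xs i)) (xs (Suc i)) \<le> d" unfolding delta_chain_def by blast
  then show ?thesis unfolding delta_chain_def using \<open>d \<le> e\<close>
    by (intro exI[of _ k] exI[of _ xs]) force
qed

lemma dc_trans:
  assumes "delta_chain X f d x y" "delta_chain X f d y z"
  shows "delta_chain X f d x z"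
proof -
  obtain m p where p: "m \<ge> 1" "p 0 = x" "p m = y" "\<forall>i\<le>m. p i \<in> X"
    "\<forall>i<m. dist (f (p i)) (p (Suc i)) \<le> d"
    using assms(1) unfolding delta_chain_def by blast
  obtain k q where q: "k \<ge> 1" "q 0 = y" "q k = z" "\<forall>i\<le>k. q i \<in> X"
    "\<forall>i<k. dist (f (q i)) (q (Suc i)) \<le> d"
    using assms(2) unfolding delta_chain_def by blast
  define r where "r = (\<lambda>i. if i \<le> m then p i else q (i - m))"
  have "r 0 = x" using p by (simp add: r_def)
  moreover have "r (m+k) = z" using q p by (simp add: r_def)
  moreover have "\<forall>i\<le>m+k. r i \<in> X" using p q by (auto simp: r_def)
  moreover have "\<forall>i<m+k. dist (f (r i)) (r (Suc i)) \<le> d"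
  proof (intro allI impI)
    fix i assume i: "i < m + k"
    show "dist (f (r i)) (r (Suc i)) \<le> d"
    proof (cases "i < m")
      case True then show ?thesis using p by (simp add: r_def)
    next
      case False
      then have "Suc i - m = Suc (i - m)" "i - m < k" using i by auto
      then show ?thesis using q p False by (cases "i = m") (auto simp: r_def)
    qed
  qed
  ultimately show ?thesis unfolding delta_chain_def using p(1)
    by (intro exI[of _ "m+k"] exI[of _ r]) auto
qed

lemma cr_trans: "chain_rel X f x y \<Longrightarrow> chain_rel X f y z \<Longrightarrow> chain_rel X f x z"
  unfolding chain_rel_def using dc_trans by blast


lemma core:
  fixes r :: "nat \<Rightarrow> 'a::metric_space"
  assumes shad: "\<And>xs. pseudo_orbit X f \<delta> xs \<Longrightarrow> \<exists>y\<in>X. shadows f (L*\<delta>) y xs"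
    and fX: "f ` X \<subseteq> X"
    and rX: "\<forall>i\<le>k. r i \<in> X" and rd: "\<forall>i<k. dist (f (r i)) (r (Suc i)) \<le> \<delta>"
    and jk: "j < k" and L0: "L \<ge> 0" and d0: "\<delta> \<ge> 0"
  shows "\<exists>r'. r' 0 = r 0 \<and> r' k = r k \<and> (\<forall>i\<le>k. r' i \<in> X) \<and>
     (\<forall>i<j. dist (f (r' i)) (r' (Suc i)) = dist (f (r i)) (r (Suc i))) \<and>
     dist (f (r' j)) (r' (Suc j)) \<le> dist (f (r j)) (r (Suc j)) + L*\<delta> \<and>
     (\<forall>i. j < i \<and> i < k \<longrightarrow> dist (f (r' i)) (r' (Suc i)) \<le> L*\<delta>)"
proof -
  define Q where "Q = (\<lambda>i. if i \<le> k then r i else (f ^^ (i - k)) (r k))"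
  have "pseudo_orbit X f \<delta> Q"
    unfolding pseudo_orbit_def
  proof (intro conjI allI)
    fix i show "Q i \<in> X" using rX fX funpow_in[OF fX, of "r k"] by (auto simp: Q_def)
  next
    fix i show "dist (f (Q i)) (Q (Suc i)) \<le> \<delta>"
    proof (cases "i < k")
      case True then show ?thesis using rd by (simp add: Q_def)
    next
      case False
      then have "Suc i - k = Suc (i - k)" by auto
      then show ?thesis using False d0 by (cases "i = k") (auto simp: Q_def)
    qed
  qed
  then obtain w where w: "w \<in> X" "\<And>i. dist ((f ^^ i) w) (Q i) \<le> L*\<delta>"
    using shad unfolding shadows_def by blast
  define r' where "r' = (\<lambda>i. if i \<le> j then r i else if i < k then (f ^^ i) w else r k)"
  have Ld: "L*\<delta> \<ge> 0" using L0 d0 by simp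
  have "r' 0 = r 0" by (simp add: r'_def)
  moreover have "r' k = r k" by (simp add: r'_def)
  moreover have "\<forall>i\<le>k. r' i \<in> X" using rX funpow_in[OF fX w(1)] by (auto simp: r'_def)
  moreover have "\<forall>i<j. dist (f (r' i)) (r' (Suc i)) = dist (f (r i)) (r (Suc i))"
    by (simp add: r'_def)
  moreover have "dist (f (r' j)) (r' (Suc j)) \<le> dist (f (r j)) (r (Suc j)) + L*\<delta>"
  proof (cases "Suc j < k")
    case True
    have "dist (f (r j)) ((f ^^ Suc j) w) \<le> dist (f (r j)) (r (Suc j)) + dist (r (Suc j)) ((f ^^ Suc j) w)"
      by (rule dist_triangle)
    moreover have "dist (r (Suc j)) ((f ^^ Suc j) w) \<le> L*\<delta>"
      using w(2)[of "Suc j"] True by (simp add: Q_def dist_commute)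
    ultimately show ?thesis using True by (simp add: r'_def)
  next
    case False
    then have "Suc j = k" using jk by simp
    then show ?thesis using Ld by (simp add: r'_def)
  qed
  moreover have "\<forall>i. j < i \<and> i < k \<longrightarrow> dist (f (r' i)) (r' (Suc i)) \<le> L*\<delta>"
  proof (intro allI impI)
    fix i assume i: "j < i \<and> i < k"
    show "dist (f (r' i)) (r' (Suc i)) \<le> L*\<delta>"
    proof (cases "Suc i < k")
      case True then show ?thesis using i Ld by (simp add: r'_def)
    next
      case False
      then have "Suc i = k" using i by simp
      then have "f ((f ^^ i) w) = (f ^^ k) w" by auto
      then show ?thesis using i w(2)[of k] \<open>Suc i = k\<close> by (simp add: r'_def Q_def)
    qed
  qed
  ultimately show ?thesis by blast
qed


lemma dc_end:
  assumes "delta_chain X f e x y'" "y \<in> X"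
  shows "delta_chain X f (e + dist y' y) x y"
proof -
  obtain k p where p: "k \<ge> 1" "p 0 = x" "p k = y'" "\<forall>i\<le>k. p i \<in> X"
    "\<forall>i<k. dist (f (p i)) (p (Suc i)) \<le> e"
    using assms(1) unfolding delta_chain_def by blast
  define q where "q = p(k := y)"
  have "\<forall>i<k. dist (f (q i)) (q (Suc i)) \<le> e + dist y' y"
  proof (intro allI impI)
    fix i assume i: "i < k"
    show "dist (f (q i)) (q (Suc i)) \<le> e + dist y' y"
    proof (cases "Suc i = k")
      case True
      have "dist (f (p i)) y \<le> dist (f (p i)) y' + dist y' y" by (rule dist_triangle)
      moreover have "dist (f (p i)) (p (Suc i)) \<le> e" using p(5) i by blast
      ultimately show ?thesis using True p(3) by (simp add: q_def)
    next
      case False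
      have "dist (f (p i)) (p (Suc i)) \<le> e" using i p(5) by blast
      then have "dist (f (p i)) (p (Suc i)) \<le> e + dist y' y"
        by (metis add_increasing2 zero_le_dist)
      then show ?thesis using False i by (simp add: q_def)
    qed
  qed
  moreover have "q 0 = x" "q k = y" using p by (auto simp: q_def)
  moreover have "\<forall>i\<le>k. q i \<in> X" using p assms(2) by (simp add: q_def)
  ultimately show ?thesis unfolding delta_chain_def using p(1) by blast
qed




lemma refine1:
  assumes shad: "\<And>xs. pseudo_orbit X f \<delta> xs \<Longrightarrow> \<exists>y\<in>X. shadows f (L*\<delta>) y xs"
    and fX: "f ` X \<subseteq> X" and L0: "L \<ge> 0"
    and xx: "chain_rel X f x x" and xy: "delta_chain X f \<delta> x y"
    and e: "0 < \<epsilon>" "\<epsilon> \<le> \<delta>"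
  shows "delta_chain X f (\<epsilon> + L*\<delta>) x y"
proof -
  obtain m p where p: "m \<ge> 1" "p 0 = x" "p m = x" "\<forall>i\<le>m. p i \<in> X"
    "\<forall>i<m. dist (f (p i)) (p (Suc i)) \<le> \<epsilon>"
    using xx e unfolding chain_rel_def delta_chain_def by blast
  obtain k q where q: "k \<ge> 1" "q 0 = x" "q k = y" "\<forall>i\<le>k. q i \<in> X"
    "\<forall>i<k. dist (f (q i)) (q (Suc i)) \<le> \<delta>"
    using xy unfolding delta_chain_def by blast
  define r where "r = (\<lambda>i. if i \<le> m then p i else q (i - m))"
  have r0: "r 0 = x" using p by (simp add: r_def)
  have rk: "r (m+k) = y" using q p by (simp add: r_def)
  have rX: "\<forall>i\<le>m+k. r i \<in> X" using p q by (auto simp: r_def)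
  have rd: "\<forall>i<m+k. dist (f (r i)) (r (Suc i)) \<le> (if i < m then \<epsilon> else \<delta>)"
  proof (intro allI impI)
    fix i assume i: "i < m + k"
    show "dist (f (r i)) (r (Suc i)) \<le> (if i < m then \<epsilon> else \<delta>)"
    proof (cases "i < m")
      case True then show ?thesis using p by (simp add: r_def)
    next
      case False
      then have "Suc i - m = Suc (i - m)" "i - m < k" using i by auto
      then show ?thesis using q p False by (cases "i = m") (auto simp: r_def)
    qed
  qed
  have rdd: "\<forall>i<m+k. dist (f (r i)) (r (Suc i)) \<le> \<delta>"
  proof (intro allI impI)
    fix i assume "i < m+k"
    then have "dist (f (r i)) (r (Suc i)) \<le> (if i < m then \<epsilon> else \<delta>)" using rd by blast
    then show "dist (f (r i)) (r (Suc i)) \<le> \<delta>" using e by (simp split: if_splits)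
  qed
  have jl: "m - 1 < m + k" using p(1) q(1) by simp
  have d0: "\<delta> \<ge> 0" using e by simp
  from core[OF shad fX rX rdd jl L0 d0] obtain r' where r':
     "r' 0 = r 0" "r' (m+k) = r (m+k)" "\<forall>i\<le>m+k. r' i \<in> X"
     "\<forall>i<m-1. dist (f (r' i)) (r' (Suc i)) = dist (f (r i)) (r (Suc i))"
     "dist (f (r' (m-1))) (r' (Suc (m-1))) \<le> dist (f (r (m-1))) (r (Suc (m-1))) + L*\<delta>"
     "\<forall>i. m-1 < i \<and> i < m+k \<longrightarrow> dist (f (r' i)) (r' (Suc i)) \<le> L*\<delta>"
    by blast
  have "\<forall>i<m+k. dist (f (r' i)) (r' (Suc i)) \<le> \<epsilon> + L*\<delta>"
  proof (intro allI impI)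
    fix i assume i: "i < m+k"
    have Ld: "L*\<delta> \<ge> 0" using L0 e by simp
    consider "i < m-1" | "i = m-1" | "m-1 < i" by linarith
    then show "dist (f (r' i)) (r' (Suc i)) \<le> \<epsilon> + L*\<delta>"
    proof cases
      case 1
      then have "dist (f (r' i)) (r' (Suc i)) = dist (f (r i)) (r (Suc i))" using r'(4) by blast
      moreover have "i < m" using 1 by simp
      ultimately show ?thesis using rd i Ld by fastforce
    next
      case 2
      then have "i < m" using p(1) by simp
      then have "dist (f (r i)) (r (Suc i)) \<le> \<epsilon>" using rd i by fastforce
      then show ?thesis using r'(5) 2 by simp
    next
      case 3
      then have "dist (f (r' i)) (r' (Suc i)) \<le> L*\<delta>" using r'(6) i by blast
      then show ?thesis using e by linarith
    qed
  qed
  moreover have "r' 0 = x" "r' (m+k) = y" using r'(1,2) r0 rk by simp_all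
  moreover have "1 \<le> m + k" using p(1) by simp
  ultimately show ?thesis unfolding delta_chain_def using r'(3) by blast
qed





lemma refine_all:
  assumes shad: "\<And>\<delta> xs. 0 < \<delta> \<Longrightarrow> \<delta> \<le> \<delta>0 \<Longrightarrow> pseudo_orbit X f \<delta> xs \<Longrightarrow> \<exists>y\<in>X. shadows f (L*\<delta>) y xs"
    and fX: "f ` X \<subseteq> X" and L0: "0 < L" and L1: "L < 1"
    and xx: "chain_rel X f x x" and xy: "delta_chain X f \<delta> x y"
    and d: "0 < \<delta>" "\<delta> \<le> \<delta>0"
  shows "chain_rel X f x y"
proof -
  define c where "c = (1 + L) / 2"
  have c: "0 < c" "c < 1" using L0 L1 by (auto simp: c_def)
  have P: "delta_chain X f (c^n * \<delta>) x y" for n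
  proof (induction n)
    case 0 then show ?case using xy by simp
  next
    case (Suc n)
    define e where "e = c^n * \<delta>"
    have e0: "0 < e" using c d by (simp add: e_def)
    have "c^n \<le> 1" using c by (simp add: power_le_one)
    then have "c^n * \<delta> \<le> \<delta>" using d by (simp add: mult_left_le_one_le)
    then have e1: "e \<le> \<delta>0" using d unfolding e_def by linarith
    have L0': "0 \<le> L" using L0 by simp
    have ch: "delta_chain X f e x y" using Suc.IH by (simp add: e_def)
    have a1: "0 < (1-L)/2*e" using L1 e0 by simp
    have a2: "(1-L)/2*e \<le> e" using L0 e0 by (simp add: mult_le_cancel_right1)
    have "delta_chain X f ((1-L)/2*e + L*e) x y"
      by (rule refine1[OF shad[OF e0 e1] fX L0' xx ch a1 a2])
    moreover have "(1-L)/2*e + L*e = c * e"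
      unfolding c_def by (simp add: field_simps)
    moreover have "c * e = c^(Suc n) * \<delta>" by (simp add: e_def)
    ultimately show ?case by simp
  qed
  show ?thesis unfolding chain_rel_def
  proof (intro allI impI)
    fix \<eta> :: real assume "\<eta> > 0"
    then obtain n where "c^n < \<eta>/\<delta>" using real_arch_pow_inv[of "\<eta>/\<delta>" c] c d by auto
    then have "c^n * \<delta> \<le> \<eta>" using d by (simp add: pos_less_divide_eq less_imp_le)
    then show "delta_chain X f \<eta> x y" using P dc_mono by blast
  qed
qed

lemma close:
  assumes shad: "\<And>\<delta> xs. 0 < \<delta> \<Longrightarrow> \<delta> \<le> \<delta>0 \<Longrightarrow> pseudo_orbit X f \<delta> xs \<Longrightarrow> \<exists>y\<in>X. shadows f (L*\<delta>) y xs"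
    and fX: "f ` X \<subseteq> X" and L0: "0 < L" and L1: "L < 1"
    and xx: "chain_rel X f x x" and xy: "delta_chain X f e x y'" and yX: "y \<in> X"
    and e: "0 < e + dist y' y" "e + dist y' y \<le> \<delta>0"
  shows "chain_rel X f x y"
  using refine_all[OF shad fX L0 L1 xx dc_end[OF xy yX] e] by blast





definition PB :: "'a::metric_space set \<Rightarrow> ('a \<Rightarrow> 'a) \<Rightarrow> 'a \<Rightarrow> 'a \<Rightarrow> nat \<Rightarrow> nat \<Rightarrow> real \<Rightarrow> bool" where
  "PB X f a b k j e \<longleftrightarrow> (\<exists>r. r 0 = a \<and> r k = b \<and> (\<forall>i\<le>k. r i \<in> X) \<and>
     (\<forall>i<j. dist (f (r i)) (r (Suc i)) = 0) \<and> (\<forall>i<k. j \<le> i \<longrightarrow> dist (f (r i)) (r (Suc i)) \<le> e))"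

lemma PB_step:
  assumes shad: "\<And>\<delta> xs. 0 < \<delta> \<Longrightarrow> \<delta> \<le> \<delta>0 \<Longrightarrow> pseudo_orbit X f \<delta> xs \<Longrightarrow> \<exists>y\<in>X. shadows f (L*\<delta>) y xs"
    and fX: "f ` X \<subseteq> X" and L0: "0 < L"
    and P: "PB X f a b k j e" and j: "1 \<le> j" "j \<le> k" and e: "0 < e" "e \<le> \<delta>0"
  shows "PB X f a b k (j - 1) (L*e)"
proof -
  obtain r where r: "r 0 = a" "r k = b" "\<forall>i\<le>k. r i \<in> X"
    "\<forall>i<j. dist (f (r i)) (r (Suc i)) = 0" "\<forall>i<k. j \<le> i \<longrightarrow> dist (f (r i)) (r (Suc i)) \<le> e"
    using P unfolding PB_def by blast
  have rd: "\<forall>i<k. dist (f (r i)) (r (Suc i)) \<le> e"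
    using r(4,5) e by (metis less_le not_le)
  have jl: "j - 1 < k" using j by simp
  from core[OF shad[OF e] fX r(3) rd jl] L0 e obtain r' where r':
     "r' 0 = r 0" "r' k = r k" "\<forall>i\<le>k. r' i \<in> X"
     "\<forall>i<j-1. dist (f (r' i)) (r' (Suc i)) = dist (f (r i)) (r (Suc i))"
     "dist (f (r' (j-1))) (r' (Suc (j-1))) \<le> dist (f (r (j-1))) (r (Suc (j-1))) + L*e"
     "\<forall>i. j-1 < i \<and> i < k \<longrightarrow> dist (f (r' i)) (r' (Suc i)) \<le> L*e"
    by auto
  have "\<forall>i<j-1. dist (f (r' i)) (r' (Suc i)) = 0" using r'(4) r(4) by simp
  moreover have "\<forall>i<k. j - 1 \<le> i \<longrightarrow> dist (f (r' i)) (r' (Suc i)) \<le> L*e"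
  proof (intro allI impI)
    fix i assume i: "i < k" "j - 1 \<le> i"
    show "dist (f (r' i)) (r' (Suc i)) \<le> L*e"
    proof (cases "i = j - 1")
      case True
      have "dist (f (r (j-1))) (r (Suc (j-1))) = 0" using r(4) j by simp
      then show ?thesis using r'(5) True by simp
    next
      case False then show ?thesis using r'(6) i by simp
    qed
  qed
  ultimately show ?thesis unfolding PB_def using r' r by (intro exI[of _ r']) auto
qed

lemma PB_iter:
  assumes shad: "\<And>\<delta> xs. 0 < \<delta> \<Longrightarrow> \<delta> \<le> \<delta>0 \<Longrightarrow> pseudo_orbit X f \<delta> xs \<Longrightarrow> \<exists>y\<in>X. shadows f (L*\<delta>) y xs"
    and fX: "f ` X \<subseteq> X" and L0: "0 < L" and L1: "L < 1"
    and P: "PB X f a b k j e" and j: "j \<le> k" and e: "0 < e" "e \<le> \<delta>0"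
  shows "J \<le> j \<Longrightarrow> PB X f a b k (j - J) (L^J * e)"
proof (induction J)
  case 0 then show ?case using P by simp
next
  case (Suc J)
  then have IH: "PB X f a b k (j - J) (L^J * e)" by simp
  have "L^J \<le> 1" using L0 L1 by (simp add: power_le_one)
  moreover have "0 \<le> L^J" using L0 by simp
  ultimately have "L^J * e \<le> e" using e by (simp add: mult_left_le_one_le)
  then have "L^J * e \<le> \<delta>0" using e by linarith
  moreover have "0 < L^J * e" using L0 e by simp
  ultimately have "PB X f a b k (j - J - 1) (L * (L^J * e))"
    using PB_step[OF shad fX L0 IH] Suc.prems j by simp
  then show ?case by (simp add: algebra_simps)
qed

lemma lemB:
  assumes shad: "\<And>\<delta> xs. 0 < \<delta> \<Longrightarrow> \<delta> \<le> \<delta>0 \<Longrightarrow> pseudo_orbit X f \<delta> xs \<Longrightarrow> \<exists>y\<in>X. shadows f (L*\<delta>) y xs"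
    and fX: "f ` X \<subseteq> X" and L0: "0 < L" and L1: "L < 1"
    and zX: "z \<in> X" and xsX: "\<forall>n. xs n \<in> X" and sh: "\<forall>n. dist ((f ^^ n) z) (xs n) \<le> L*\<delta>"
    and d: "0 < \<delta>" "\<delta> \<le> \<delta>0" and eta: "0 < \<eta>"
  shows "\<exists>n. delta_chain X f \<eta> z (xs n)"
proof -
  have Ld: "0 < L*\<delta>" "L*\<delta> \<le> \<delta>0" using L0 L1 d by (auto simp: mult_le_cancel_right1 less_imp_le intro: order_trans[of _ \<delta>])
  obtain J where J: "L^J < \<eta>/(L*\<delta>)" using real_arch_pow_inv[of "\<eta>/(L*\<delta>)" L] L1 Ld eta by auto
  define n where "n = Suc J"
  define r where "r = (\<lambda>i. if i < n then (f ^^ i) z else xs n)"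
  have "PB X f z (xs n) n J (L*\<delta>)" unfolding PB_def
  proof (intro exI[of _ r] conjI allI impI)
    show "r 0 = z" by (simp add: r_def n_def)
    show "r n = xs n" by (simp add: r_def)
    fix i
    show "i \<le> n \<Longrightarrow> r i \<in> X" using funpow_in[OF fX zX] xsX by (simp add: r_def)
    show "i < J \<Longrightarrow> dist (f (r i)) (r (Suc i)) = 0" by (simp add: r_def n_def)
    assume "i < n" "J \<le> i"
    then have "i = J" by (simp add: n_def)
    have h: "dist (f ((f ^^ J) z)) (xs (Suc J)) \<le> L*\<delta>" using sh[rule_format, of "Suc J"] by simp
    then show "dist (f (r i)) (r (Suc i)) \<le> L*\<delta>" using \<open>i = J\<close> by (simp add: r_def n_def)
  qed
  from PB_iter[OF shad fX L0 L1 this _ Ld, of J] have "PB X f z (xs n) n 0 (L^J * (L*\<delta>))"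
    by (simp add: n_def)
  then obtain r where r: "r 0 = z" "r n = xs n" "\<forall>i\<le>n. r i \<in> X"
    "\<forall>i<n. dist (f (r i)) (r (Suc i)) \<le> L^J * (L*\<delta>)" unfolding PB_def by auto
  have "L^J * (L*\<delta>) \<le> \<eta>" using J Ld by (simp add: pos_less_divide_eq less_imp_le)
  then have "delta_chain X f \<eta> z (xs n)" unfolding delta_chain_def using r
    by (intro exI[of _ n] exI[of _ r]) (auto simp: n_def intro: order_trans)
  then show ?thesis by blast
qed




theorem theorem1p8:
  fixes X :: "'a::metric_space set" and f :: "'a \<Rightarrow> 'a" and L :: real
  assumes "compact X"
    and "continuous_on X f" and "f ` X \<subseteq> X"
    and "0 < L" and "L < 1"
    and "lipschitz_shadowing X f L"
  shows "finite (chain_components X f) \<and>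
         (\<forall>C\<in>chain_components X f. lipschitz_shadowing C f L)"
proof -
  note fX = assms(3) and L0 = assms(4) and L1 = assms(5)
  obtain \<delta>0 where d0: "\<delta>0 > 0" and shad0: "\<forall>\<delta>. 0 < \<delta> \<and> \<delta> \<le> \<delta>0 \<longrightarrow>
        (\<forall>xs. pseudo_orbit X f \<delta> xs \<longrightarrow> (\<exists>y\<in>X. shadows f (L * \<delta>) y xs))"
    using assms(6) unfolding lipschitz_shadowing_def by blast
  have shad: "\<And>\<delta> xs. 0 < \<delta> \<Longrightarrow> \<delta> \<le> \<delta>0 \<Longrightarrow> pseudo_orbit X f \<delta> xs \<Longrightarrow> \<exists>y\<in>X. shadows f (L*\<delta>) y xs"
    using shad0 by blast
  define CR where "CR = chain_recurrent X f"
  define comp where "comp = (\<lambda>x. {y \<in> CR. chain_rel X f x y \<and> chain_rel X f y x})"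
  have CRX: "\<And>x. x \<in> CR \<Longrightarrow> x \<in> X \<and> chain_rel X f x x"
    unfolding CR_def chain_recurrent_def by blast
  have comps: "chain_components X f = {C. \<exists>x\<in>CR. C = comp x}"
    unfolding chain_components_def CR_def comp_def by blast
  have closeCR: "chain_rel X f x y" if "x \<in> CR" "y \<in> X" "dist x y < \<delta>0" for x y
  proof -
    define \<epsilon> where "\<epsilon> = \<delta>0 - dist x y"
    have e: "\<epsilon> > 0" using that by (simp add: \<epsilon>_def)
    have "delta_chain X f \<epsilon> x x" using CRX[OF that(1)] e unfolding chain_rel_def by blast
    from close[where ?\<delta>0.0=\<delta>0, OF shad fX L0 L1 _ this that(2)] show ?thesis
      using CRX[OF that(1)] e d0 by (simp add: \<epsilon>_def)
  qed
  have comp_eq: "comp x = comp x'" if "chain_rel X f x x'" "chain_rel X f x' x" for x x'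
    unfolding comp_def using that cr_trans by blast
  have fin: "finite (chain_components X f)"
  proof -
    have "seq_compact X" using assms(1) by (rule compact_imp_seq_compact)
    from seq_compact_imp_totally_bounded[OF this, rule_format, of "\<delta>0/2"] d0
    obtain K where K: "finite K" "X \<subseteq> (\<Union>k\<in>K. ball k (\<delta>0/2))" by auto
    define h where "h = (\<lambda>k. comp (SOME x. x \<in> CR \<and> dist k x < \<delta>0/2))"
    have "chain_components X f \<subseteq> h ` K"
    proof
      fix C assume "C \<in> chain_components X f"
      then obtain x where x: "x \<in> CR" "C = comp x" using comps by blast
      have "x \<in> (\<Union>k\<in>K. ball k (\<delta>0/2))" using K(2) CRX[OF x(1)] by blast
      then obtain k where k1: "k \<in> K" "x \<in> ball k (\<delta>0/2)" by blast
      then have k: "k \<in> K" "dist k x < \<delta>0/2" by auto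
      define x' where "x' = (SOME x. x \<in> CR \<and> dist k x < \<delta>0/2)"
      have x': "x' \<in> CR \<and> dist k x' < \<delta>0/2" unfolding x'_def
      proof (rule someI[of _ x])
        show "x \<in> CR \<and> dist k x < \<delta>0/2" using x(1) k(2) by (rule conjI)
      qed
      have "dist x x' \<le> dist x k + dist k x'" by (rule dist_triangle)
      then have dxx: "dist x x' < \<delta>0" using k x' by (simp add: dist_commute)
      have x'X: "x' \<in> X" using x' CRX by blast
      have xX: "x \<in> X" using x CRX by blast
      have c1: "chain_rel X f x x'" using closeCR[OF x(1) x'X dxx] .
      have "dist x' x < \<delta>0" using dxx by (simp add: dist_commute)
      then have c2: "chain_rel X f x' x" using closeCR[OF conjunct1[OF x'] xX] by blast
      have cxx: "comp x = comp x'" using comp_eq[OF c1 c2] .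
      have hk: "h k = comp x'" unfolding h_def x'_def by (rule refl)
      have "C = h k" using x(2) cxx hk by simp
      then show "C \<in> h ` K" using k(1) by (rule image_eqI)
    qed
    then show ?thesis by (rule finite_surj[OF K(1)])
  qed
  have LS: "lipschitz_shadowing C f L" if "C \<in> chain_components X f" for C
  proof -
    have "\<exists>x\<in>CR. C = comp x" using that unfolding comps by simp
    then obtain x where x: "x \<in> CR" "C = comp x" by (rule bexE)
    have "comp x \<subseteq> CR" unfolding comp_def by (rule Collect_restrict)
    moreover have "CR \<subseteq> X"
    proof
      fix y assume "y \<in> CR" then show "y \<in> X" using CRX by blast
    qed
    ultimately have CsubX: "C \<subseteq> X" using x(2) by simp
    have key: "\<exists>y\<in>C. shadows f (L*\<delta>) y xs"
      if d: "0 < \<delta> \<and> \<delta> \<le> \<delta>0" and po: "pseudo_orbit C f \<delta> xs" for \<delta> xs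
    proof -
      have xsC: "\<forall>i. xs i \<in> C" using po unfolding pseudo_orbit_def by blast
      have xsX: "\<forall>i. xs i \<in> X" using xsC CsubX by blast
      have "pseudo_orbit X f \<delta> xs" using po xsX unfolding pseudo_orbit_def by blast
      moreover have "0 < \<delta>" "\<delta> \<le> \<delta>0" using d by auto
      ultimately have "\<exists>y\<in>X. shadows f (L*\<delta>) y xs" using shad by simp
      then obtain z where z: "z \<in> X" "shadows f (L*\<delta>) z xs" by blast
      have sh: "\<forall>n. dist ((f ^^ n) z) (xs n) \<le> L*\<delta>" using z(2) unfolding shadows_def by blast
      have zx: "chain_rel X f z x" unfolding chain_rel_def
      proof (intro allI impI)
        fix \<eta> :: real assume eta: "\<eta> > 0"
        obtain n where n: "delta_chain X f \<eta> z (xs n)"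
          using lemB[where ?\<delta>0.0=\<delta>0, OF shad fX L0 L1 z(1) xsX sh _ _ eta] d by blast
        have "chain_rel X f (xs n) x" using xsC x unfolding comp_def by blast
        then have "delta_chain X f \<eta> (xs n) x" using eta unfolding chain_rel_def by blast
        then show "delta_chain X f \<eta> z x" using n dc_trans by blast
      qed
      have xz: "chain_rel X f x z"
      proof -
        define e where "e = \<delta>0 - L*\<delta>"
        have "L*\<delta> < 1*\<delta>" using L1 d by (intro mult_strict_right_mono) auto
        then have e0: "e > 0" using d unfolding e_def by linarith
        have "chain_rel X f x (xs 0)" using xsC x unfolding comp_def by blast
        then have ch: "delta_chain X f e x (xs 0)" using e0 unfolding chain_rel_def by blast
        have dz: "dist (xs 0) z \<le> L*\<delta>" using sh[rule_format, of 0] by (simp add: dist_commute)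
        have "0 < e + dist (xs 0) z" "e + dist (xs 0) z \<le> \<delta>0" using e0 dz zero_le_dist[of "xs 0" z] unfolding e_def by linarith+
        from close[where ?\<delta>0.0=\<delta>0, OF shad fX L0 L1 _ ch z(1) this] show ?thesis using CRX[OF x(1)] by blast
      qed
      have zz: "chain_rel X f z z" using cr_trans[OF zx xz] .
      have "z \<in> CR" unfolding CR_def chain_recurrent_def using z(1) zz by blast
      then have "z \<in> C" unfolding x(2) comp_def using zx xz by blast
      then show "\<exists>y\<in>C. shadows f (L*\<delta>) y xs" using z(2) by blast
    qed
    show ?thesis unfolding lipschitz_shadowing_def
    proof (rule exI[of _ \<delta>0], rule conjI[OF d0], intro allI impI)
      fix \<delta> xs assume "0 < \<delta> \<and> \<delta> \<le> \<delta>0" "pseudo_orbit C f \<delta> xs"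
      then show "\<exists>y\<in>C. shadows f (L*\<delta>) y xs" by (rule key)
    qed
  qed
  show ?thesis
  proof (rule conjI[OF fin], rule ballI)
    fix C assume "C \<in> chain_components X f"
    then show "lipschitz_shadowing C f L" by (rule LS)
  qed
qed



end
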